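(* Let $G$ be a finite simple graph with at least one edge, and suppose $\chi(G) \in \{\Delta(G), \Delta(G)+1\}$, where $\chi(G)$ is the chromatic number and $\Delta(G)$ the maximum degree of $G$. Then ${\rm vs}_{\chi}(G) = {\rm ivs}_{\chi}(G)$.
   Context: All graphs are finite, simple and have at least one edge. The chromatic vertex stability number ${\rm vs}_{\chi}(G)$ is the minimum number of vertices of $G$ whose deletion results in a graph $H$ with $\chi(H) = \chi(G)-1$. The independent chromatic vertex stability number ${\rm ivs}_{\chi}(G)$ is the minimum cardinality of an independent set of vertices of $G$ whose deletion results in a graph $H$ with $\chi(H) = \chi(G)-1$. *)

theory Defs
  imports Main
begin

definition simple_graph :: "'a set \<Rightarrow> 'a set set \<Rightarrow> bool" where
  "simple_graph V E \<longleftrightarrow> finite V \<and> (\<forall>e\<in>E. \<exists>u v. u \<in> V \<and> v \<in> V \<and> u \<noteq> v \<and> e = {u, v})"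

definition degree :: "'a set set \<Rightarrow> 'a \<Rightarrow> nat" where
  "degree E v = card {e \<in> E. v \<in> e}"

definition max_degree :: "'a set \<Rightarrow> 'a set set \<Rightarrow> nat" where
  "max_degree V E = Max (degree E ` V)"

definition proper_colouring :: "'a set \<Rightarrow> 'a set set \<Rightarrow> nat \<Rightarrow> ('a \<Rightarrow> nat) \<Rightarrow> bool" where
  "proper_colouring V E k f \<longleftrightarrow> (\<forall>v\<in>V. f v < k) \<and> (\<forall>u v. {u, v} \<in> E \<longrightarrow> u \<noteq> v \<longrightarrow> f u \<noteq> f v)"

definition chromatic_number :: "'a set \<Rightarrow> 'a set set \<Rightarrow> nat" where
  "chromatic_number V E = (LEAST k. \<exists>f. proper_colouring V E k f)"

definition del_verts :: "'a set \<Rightarrow> 'a set set \<Rightarrow> 'a set \<Rightarrow> 'a set \<times> 'a set set" where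
  "del_verts V E S = (V - S, {e \<in> E. e \<inter> S = {}})"

definition independent_set :: "'a set \<Rightarrow> 'a set set \<Rightarrow> 'a set \<Rightarrow> bool" where
  "independent_set V E S \<longleftrightarrow> S \<subseteq> V \<and> (\<forall>e\<in>E. \<not> e \<subseteq> S)"

definition chromatic_vertex_stability :: "'a set \<Rightarrow> 'a set set \<Rightarrow> nat" where
  "chromatic_vertex_stability V E =
     (LEAST n. \<exists>S. S \<subseteq> V \<and> card S = n \<and>
        chromatic_number (fst (del_verts V E S)) (snd (del_verts V E S)) = chromatic_number V E - 1)"

definition indep_chromatic_vertex_stability :: "'a set \<Rightarrow> 'a set set \<Rightarrow> nat" where
  "indep_chromatic_vertex_stability V E =
     (LEAST n. \<exists>S. independent_set V E S \<and> card S = n \<and>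
        chromatic_number (fst (del_verts V E S)) (snd (del_verts V E S)) = chromatic_number V E - 1)"

end

theory Submission
  imports Defs
begin

lemma chrom_attained:
  assumes "finite V" "\<forall>e\<in>E. e \<subseteq> V"
  shows "\<exists>f. proper_colouring V E (chromatic_number V E) f"
proof -
  obtain h where h: "bij_betw h V {0..<card V}" using ex_bij_betw_finite_nat[OF assms(1)] by blast
  have "proper_colouring V E (card V) h"
    using h assms(2) unfolding proper_colouring_def bij_betw_def inj_on_def by auto
  then have "\<exists>k f. proper_colouring V E k f" by blast
  then show ?thesis unfolding chromatic_number_def by (rule LeastI_ex)
qed

lemma chrom_le:
  assumes "proper_colouring V E m f"
  shows "chromatic_number V E \<le> m"
  unfolding chromatic_number_def using assms by (blast intro: Least_le)

lemma nbr_card_le_degree: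
  assumes "finite E"
  shows "card {y \<in> A. {v, y} \<in> E} \<le> degree E v"
  unfolding degree_def
proof (rule card_inj_on_le[where f = "\<lambda>y. {v, y}"])
  show "inj_on (\<lambda>y. {v, y}) {y \<in> A. {v, y} \<in> E}"
    unfolding inj_on_def by (auto simp: doubleton_eq_iff)
  show "(\<lambda>y. {v, y}) ` {y \<in> A. {v, y} \<in> E} \<subseteq> {e \<in> E. v \<in> e}" by auto
  show "finite {e \<in> E. v \<in> e}" using assms by auto
qed

lemma key:
  fixes V :: "'a set" and E :: "'a set set" and k :: nat and f :: "'a \<Rightarrow> nat"
  assumes fin: "finite V"
    and finE: "finite E"
    and Ein: "\<forall>e\<in>E. \<exists>u v. u \<in> V \<and> v \<in> V \<and> u \<noteq> v \<and> e = {u, v}"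
    and deg: "\<forall>v\<in>V. degree E v \<le> k + 1"
    and f: "proper_colouring V E (k + 1) f"
    and S0: "S0 \<subseteq> V" "proper_colouring (V - S0) {e\<in>E. e \<inter> S0 = {}} k c0"
  shows "\<exists>I c. independent_set V E I \<and> card I \<le> card S0
           \<and> proper_colouring (V - I) {e\<in>E. e \<inter> I = {}} k c"
proof -
  define P where "P S c \<longleftrightarrow> S \<subseteq> V \<and> proper_colouring (V - S) {e\<in>E. e \<inter> S = {}} k c"
    for S c
  define s where "s = (LEAST n. \<exists>S c. P S c \<and> card S = n)"
  have P0: "P S0 c0" using S0 unfolding P_def by blast
  have exs: "\<exists>S c. P S c \<and> card S = s"
    unfolding s_def by (rule LeastI_ex) (use P0 in blast)
  have smin: "s \<le> card S" if "P S c" for S c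
    unfolding s_def by (rule Least_le) (use that in blast)
  have sS0: "s \<le> card S0" using smin[OF P0] .
  define D where "D S c = card {x\<in>V. (if x \<in> S then k else c x) \<noteq> f x}" for S c
  obtain S1 c1 where S1: "P S1 c1" "card S1 = s" using exs by blast
  obtain Sc where Sc: "(\<lambda>(S, c). P S c \<and> card S = s) Sc"
    "\<forall>y. (\<lambda>(S, c). P S c \<and> card S = s) y \<longrightarrow> (\<lambda>(S, c). D S c) Sc \<le> (\<lambda>(S, c). D S c) y"
    using ex_has_least_nat[of "\<lambda>(S, c). P S c \<and> card S = s" "(S1, c1)" "\<lambda>(S, c). D S c"] S1
    by auto
  obtain S c where Scd: "Sc = (S, c)" by fastforce
  have PS: "P S c" and cardS: "card S = s" using Sc(1) Scd by auto
  have Dmin: "D S c \<le> D S' c'" if "P S' c'" "card S' = s" for S' c'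
    using Sc(2) Scd that by auto
  have SV: "S \<subseteq> V" and cS: "proper_colouring (V - S) {e\<in>E. e \<inter> S = {}} k c"
    using PS unfolding P_def by auto
  have finS: "finite S" using SV fin finite_subset by blast
  have M: "\<exists>y \<in> V - S. {x, y} \<in> E \<and> c y = j" if x: "x \<in> S" and j: "j < k" for x j
  proof (rule ccontr)
    assume nex: "\<not> (\<exists>y \<in> V - S. {x, y} \<in> E \<and> c y = j)"
    define S' where "S' = S - {x}"
    define c' where "c' = c(x := j)"
    have "P S' c'"
      unfolding P_def proper_colouring_def
    proof (intro conjI allI impI ballI)
      show "S' \<subseteq> V" using SV unfolding S'_def by auto
    next
      fix y assume "y \<in> V - S'"
      then show "c' y < k" using cS j unfolding proper_colouring_def S'_def c'_def by auto
    next
      fix a b assume ab: "{a, b} \<in> {e \<in> E. e \<inter> S' = {}}" "a \<noteq> b"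
      have abV: "a \<in> V" "b \<in> V" using ab(1) Ein by (auto simp: doubleton_eq_iff)
      show "c' a \<noteq> c' b"
      proof (cases "a = x")
        case True
        then have "b \<notin> S" using ab unfolding S'_def by auto
        then have "c b \<noteq> j" using nex True ab abV by auto
        then show ?thesis using True ab(2) unfolding c'_def by auto
      next
        case False
        show ?thesis
        proof (cases "b = x")
          case True
          then have "a \<notin> S" using ab unfolding S'_def by auto
          moreover have "{x, a} \<in> E" using ab True by (auto simp: insert_commute)
          ultimately have "c a \<noteq> j" using nex abV by auto
          then show ?thesis using True ab(2) unfolding c'_def by auto
        next
          case False2: False
          have "{a, b} \<inter> S = {}" using ab False False2 unfolding S'_def by auto
          then have "c a \<noteq> c b" using cS ab unfolding proper_colouring_def by auto
          then show ?thesis using False False2 unfolding c'_def by auto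
        qed
      qed
    qed
    moreover have "card S' < s" using cardS x finS unfolding S'_def
      by (metis card_Diff1_less)
    ultimately show False using smin by fastforce
  qed
  have indep: "independent_set V E S"
    unfolding independent_set_def
  proof (intro conjI ballI)
    show "S \<subseteq> V" by (rule SV)
  next
    fix e assume eE: "e \<in> E"
    show "\<not> e \<subseteq> S"
    proof
      assume eS: "e \<subseteq> S"
      obtain a b where ab: "a \<noteq> b" "e = {a, b}" using Ein eE by blast
      have fab: "f a \<noteq> f b" using f eE ab unfolding proper_colouring_def by auto
      obtain v u where vu: "v \<noteq> u" "{v, u} \<in> E" "v \<in> S" "u \<in> S" "f v \<noteq> k"
      proof (cases "f a = k")
        case True
        then show ?thesis using that[of b a] ab eE eS fab by (auto simp: insert_commute)
      next
        case False
        then show ?thesis using that[of a b] ab eE eS by auto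
      qed
      have vV: "v \<in> V" using vu SV by auto
      define i where "i = f v"
      have "f v < k + 1" using f vV unfolding proper_colouring_def by auto
      then have ik: "i < k" using vu(5) unfolding i_def by linarith
      define N where "N = {y \<in> V - S. {v, y} \<in> E}"
      have finN: "finite N" unfolding N_def using fin by auto
      have "insert u N \<subseteq> {y \<in> V. {v, y} \<in> E}" unfolding N_def using vu SV by auto
      then have "card (insert u N) \<le> card {y \<in> V. {v, y} \<in> E}"
        using fin by (intro card_mono) auto
      also have "\<dots> \<le> degree E v" by (rule nbr_card_le_degree[OF finE])
      also have "\<dots> \<le> k + 1" using deg vV by auto
      finally have "card (insert u N) \<le> k + 1" .
      moreover have "u \<notin> N" unfolding N_def using vu by auto
      ultimately have cN: "card N \<le> k" using finN by simp
      have "{0..<k} \<subseteq> c ` N"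
      proof
        fix j assume "j \<in> {0..<k}"
        then obtain y where "y \<in> V - S" "{v, y} \<in> E" "c y = j" using M[OF vu(3)] by auto
        then show "j \<in> c ` N" unfolding N_def by auto
      qed
      then have "card {0..<k} \<le> card (c ` N)" using finN by (intro card_mono) auto
      then have "k \<le> card (c ` N)" by simp
      moreover have "card (c ` N) \<le> card N" using finN by (rule card_image_le)
      ultimately have "card (c ` N) = card N" using cN by linarith
      then have injN: "inj_on c N" using finN inj_on_iff_eq_card by blast
      obtain w where w: "w \<in> V - S" "{v, w} \<in> E" "c w = i" using M[OF vu(3) ik] by auto
      have wN: "w \<in> N" unfolding N_def using w by auto
      have vw: "v \<noteq> w" using w vu by auto
      define S' where "S' = insert w (S - {v})"
      define c' where "c' = c(v := i)"
      have PS': "P S' c'"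
        unfolding P_def proper_colouring_def
      proof (intro conjI allI impI ballI)
        show "S' \<subseteq> V" using SV w unfolding S'_def by auto
      next
        fix y assume y: "y \<in> V - S'"
        show "c' y < k"
        proof (cases "y = v")
          case True then show ?thesis using ik unfolding c'_def by auto
        next
          case False
          then have "y \<in> V - S" using y unfolding S'_def by auto
          then show ?thesis using cS False unfolding proper_colouring_def c'_def by auto
        qed
      next
        fix a b assume ab: "{a, b} \<in> {e \<in> E. e \<inter> S' = {}}" "a \<noteq> b"
        have abV: "a \<in> V" "b \<in> V" using ab(1) Ein by (auto simp: doubleton_eq_iff)
        have nS: "\<And>y. y \<in> {a, b} \<Longrightarrow> y \<noteq> v \<Longrightarrow> y \<notin> S" using ab(1) unfolding S'_def by auto
        have nw: "\<And>y. y \<in> {a, b} \<Longrightarrow> y \<noteq> w" using ab(1) unfolding S'_def by auto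
        show "c' a \<noteq> c' b"
        proof (cases "a = v")
          case True
          then have bN: "b \<in> N" using nS[of b] abV ab unfolding N_def by auto
          have "c b \<noteq> i"
          proof
            assume "c b = i"
            then have "b = w" using injN bN wN w(3) unfolding inj_on_def by auto
            then show False using nw by auto
          qed
          then show ?thesis using True ab(2) unfolding c'_def by auto
        next
          case False
          show ?thesis
          proof (cases "b = v")
            case True
            have "{v, a} \<in> E" using ab True by (auto simp: insert_commute)
            then have aN: "a \<in> N" using nS[of a] abV False unfolding N_def by auto
            have "c a \<noteq> i"
            proof
              assume "c a = i"
              then have "a = w" using injN aN wN w(3) unfolding inj_on_def by auto
              then show False using nw by auto
            qed
            then show ?thesis using True ab(2) unfolding c'_def by auto
          next
            case False2: False
            have "{a, b} \<inter> S = {}" using nS False False2 by auto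
            then have "c a \<noteq> c b" using cS ab unfolding proper_colouring_def by auto
            then show ?thesis using False False2 unfolding c'_def by auto
          qed
        qed
      qed
      have "card S > 0" using finS vu(3) card_gt_0_iff by blast
      then have s1: "s \<ge> 1" using cardS by linarith
      have cardS': "card S' = s"
        using cardS finS vu(3) w(1) unfolding S'_def by (simp add: card_Diff_singleton) (use s1 in linarith)
      define A where "A = {x\<in>V. (if x \<in> S then k else c x) \<noteq> f x}"
      define A' where "A' = {x\<in>V. (if x \<in> S' then k else c' x) \<noteq> f x}"
      have fvw: "f v \<noteq> f w" using f w(2) vw unfolding proper_colouring_def by auto
      have "A' \<subseteq> A - {v}"
      proof
        fix x assume x: "x \<in> A'"
        show "x \<in> A - {v}"
        proof (cases "x = w")
          case True
          then show ?thesis using w fvw vw unfolding A_def i_def by auto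
        next
          case False
          have xV: "x \<in> V" and xd: "(if x \<in> S' then k else c' x) \<noteq> f x"
            using x unfolding A'_def by auto
          have xv: "x \<noteq> v"
          proof
            assume "x = v"
            then have "x \<notin> S'" "c' x = f x" using vw unfolding S'_def c'_def i_def by auto
            then show False using xd by simp
          qed
          have "(x \<in> S') = (x \<in> S)" using xv False unfolding S'_def by auto
          moreover have "c' x = c x" using xv unfolding c'_def by simp
          ultimately have "(if x \<in> S then k else c x) \<noteq> f x" using xd by (auto split: if_splits)
          then show ?thesis using xV xv unfolding A_def by simp
        qed
      qed
      moreover have "v \<in> A" unfolding A_def using vV vu(3) vu(5) by auto
      ultimately have "A' \<subset> A" by blast
      moreover have "finite A" using fin unfolding A_def by simp
      ultimately have "card A' < card A" by (simp add: psubset_card_mono)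
      then have "D S' c' < D S c" unfolding D_def A_def A'_def by simp
      then show False using Dmin[OF PS' cardS'] by simp
    qed
  qed
  show ?thesis using indep cardS sS0 cS by blast
qed


theorem theorem1:
  fixes V :: "'a set" and E :: "'a set set"
  assumes "simple_graph V E"
    and "E \<noteq> {}"
    and "chromatic_number V E = max_degree V E \<or> chromatic_number V E = max_degree V E + 1"
  shows "chromatic_vertex_stability V E = indep_chromatic_vertex_stability V E"
proof -
  have fin: "finite V" and Ein: "\<forall>e\<in>E. \<exists>u v. u \<in> V \<and> v \<in> V \<and> u \<noteq> v \<and> e = {u, v}"
    using assms(1) unfolding simple_graph_def by blast+
  have Esub: "\<forall>e\<in>E. e \<subseteq> V"
  proof
    fix e assume "e \<in> E"
    then obtain u v where "u \<in> V" "v \<in> V" "e = {u, v}" using Ein by blast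
    then show "e \<subseteq> V" by simp
  qed
  have finE: "finite E"
  proof (rule finite_subset)
    show "E \<subseteq> Pow V" using Esub by blast
    show "finite (Pow V)" using fin by simp
  qed
  define ch where "ch = chromatic_number V E"
  obtain f where f0: "proper_colouring V E ch f"
    using chrom_attained[OF fin Esub] unfolding ch_def by blast
  obtain e where eE: "e \<in> E" using assms(2) by blast
  then obtain u v where "u \<in> V" using Ein by blast
  then have "f u < ch" using f0 unfolding proper_colouring_def by auto
  then have ch0: "ch \<noteq> 0" by simp
  define k where "k = ch - 1"
  have chk: "ch = k + 1" using ch0 unfolding k_def by simp
  have f: "proper_colouring V E (k + 1) f" using f0 chk by simp
  have deg: "\<forall>v\<in>V. degree E v \<le> k + 1"
  proof
    fix v assume "v \<in> V"
    then have "degree E v \<le> max_degree V E" unfolding max_degree_def using fin by simp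
    also have "\<dots> \<le> ch" using assms(3) unfolding ch_def by auto
    finally show "degree E v \<le> k + 1" using chk by simp
  qed
  have Esub': "\<forall>e\<in>{e \<in> E. e \<inter> I = {}}. e \<subseteq> V - I" for I using Esub by blast
  have chdel: "chromatic_number (V - I) {e \<in> E. e \<inter> I = {}} = ch - 1"
    if I: "independent_set V E I" and c: "proper_colouring (V - I) {e \<in> E. e \<inter> I = {}} k c"
    for I c
  proof -
    define m where "m = chromatic_number (V - I) {e \<in> E. e \<inter> I = {}}"
    have "m \<le> k" using chrom_le[OF c] unfolding m_def .
    moreover have "\<not> m < k"
    proof
      assume mk: "m < k"
      obtain g where g: "proper_colouring (V - I) {e \<in> E. e \<inter> I = {}} m g"
        using chrom_attained[of "V - I" "{e \<in> E. e \<inter> I = {}}"] fin Esub' unfolding m_def by blast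
      define h where "h x = (if x \<in> I then m else g x)" for x
      have "proper_colouring V E (m + 1) h"
        unfolding proper_colouring_def
      proof (intro conjI allI impI ballI)
        fix x assume xV: "x \<in> V"
        show "h x < m + 1"
        proof (cases "x \<in> I")
          case True then show ?thesis unfolding h_def by simp
        next
          case False
          then have "x \<in> V - I" using xV by simp
          then have "g x < m" using g unfolding proper_colouring_def by blast
          then show ?thesis using False unfolding h_def by simp
        qed
      next
        fix a b assume ab: "{a, b} \<in> E" "a \<noteq> b"
        have abV: "a \<in> V" "b \<in> V" using ab Esub by auto
        have notboth: "\<not> (a \<in> I \<and> b \<in> I)" using I ab unfolding independent_set_def by auto
        show "h a \<noteq> h b"
        proof (cases "a \<in> I")
          case True
          then have "b \<notin> I" using notboth by auto
          then have "g b < m" using g abV unfolding proper_colouring_def by auto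
          then show ?thesis using True \<open>b \<notin> I\<close> unfolding h_def by auto
        next
          case False
          show ?thesis
          proof (cases "b \<in> I")
            case True
            then have "g a < m" using g abV False unfolding proper_colouring_def by auto
            then show ?thesis using True False unfolding h_def by auto
          next
            case False2: False
            have "{a, b} \<in> {e \<in> E. e \<inter> I = {}}" using ab False False2 by auto
            then have "g a \<noteq> g b" using g ab unfolding proper_colouring_def by blast
            then show ?thesis using False False2 unfolding h_def by auto
          qed
        qed
      qed
      then have "ch \<le> m + 1" using chrom_le unfolding ch_def by blast
      then show False using mk chk by simp
    qed
    ultimately show ?thesis unfolding m_def k_def by simp
  qed
  have conv: "\<exists>I. independent_set V E I \<and> card I \<le> card S
      \<and> chromatic_number (V - I) {e \<in> E. e \<inter> I = {}} = ch - 1"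
    if S: "S \<subseteq> V" and c0: "proper_colouring (V - S) {e \<in> E. e \<inter> S = {}} k c0" for S c0
  proof -
    obtain I c where "independent_set V E I" "card I \<le> card S"
        "proper_colouring (V - I) {e\<in>E. e \<inter> I = {}} k c"
      using key[OF fin finE Ein deg f S c0] by blast
    then show ?thesis using chdel by blast
  qed
  define Q where "Q n \<longleftrightarrow> (\<exists>S. S \<subseteq> V \<and> card S = n \<and>
        chromatic_number (fst (del_verts V E S)) (snd (del_verts V E S)) = chromatic_number V E - 1)"
    for n
  define R where "R n \<longleftrightarrow> (\<exists>S. independent_set V E S \<and> card S = n \<and>
        chromatic_number (fst (del_verts V E S)) (snd (del_verts V E S)) = chromatic_number V E - 1)"
    for n
  have vs: "chromatic_vertex_stability V E = (LEAST n. Q n)"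
    unfolding chromatic_vertex_stability_def Q_def by simp
  have ivs: "indep_chromatic_vertex_stability V E = (LEAST n. R n)"
    unfolding indep_chromatic_vertex_stability_def R_def by simp
  have RQ: "R n \<Longrightarrow> Q n" for n unfolding R_def Q_def independent_set_def by blast
  define S0 where "S0 = {x \<in> V. f x = k}"
  have S0V: "S0 \<subseteq> V" unfolding S0_def by auto
  have c0: "proper_colouring (V - S0) {e \<in> E. e \<inter> S0 = {}} k f"
    unfolding proper_colouring_def
  proof (intro conjI allI impI ballI)
    fix x assume "x \<in> V - S0"
    then have "f x < k + 1" "f x \<noteq> k" using f unfolding proper_colouring_def S0_def by auto
    then show "f x < k" by simp
  next
    fix a b assume "{a, b} \<in> {e \<in> E. e \<inter> S0 = {}}" "a \<noteq> b"
    then show "f a \<noteq> f b" using f unfolding proper_colouring_def by blast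
  qed
  obtain I0 where "independent_set V E I0"
      "chromatic_number (V - I0) {e \<in> E. e \<inter> I0 = {}} = ch - 1"
    using conv[OF S0V c0] by blast
  then have "R (card I0)" unfolding R_def del_verts_def ch_def by auto
  then have Rl: "R (LEAST n. R n)" by (rule LeastI)
  then have "Q (LEAST n. R n)" by (rule RQ)
  then have le1: "(LEAST n. Q n) \<le> (LEAST n. R n)" by (rule Least_le)
  have Ql: "Q (LEAST n. Q n)" using \<open>Q (LEAST n. R n)\<close> by (rule LeastI)
  then obtain S where S: "S \<subseteq> V" "card S = (LEAST n. Q n)"
      "chromatic_number (V - S) {e \<in> E. e \<inter> S = {}} = ch - 1"
    unfolding Q_def del_verts_def ch_def by auto
  obtain c where c: "proper_colouring (V - S) {e \<in> E. e \<inter> S = {}}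
      (chromatic_number (V - S) {e \<in> E. e \<inter> S = {}}) c"
    using chrom_attained[of "V - S" "{e \<in> E. e \<inter> S = {}}"] fin Esub' by blast
  have c': "proper_colouring (V - S) {e \<in> E. e \<inter> S = {}} k c" using c S(3) unfolding k_def by simp
  obtain I where I: "independent_set V E I" "card I \<le> card S"
      "chromatic_number (V - I) {e \<in> E. e \<inter> I = {}} = ch - 1"
    using conv[OF S(1) c'] by blast
  then have "R (card I)" unfolding R_def del_verts_def ch_def by auto
  then have "(LEAST n. R n) \<le> card I" by (rule Least_le)
  then have "(LEAST n. R n) \<le> (LEAST n. Q n)" using I(2) S(2) by simp
  then show ?thesis using vs ivs le1 by simp
qed

end
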